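(* Consider the decentralized secure pliable index coding problem with $m$ users, $m$ messages and $s$-circular-shift side information sets, as defined in the context, and restrict all encoding functions to be linear. In each of the following cases there is no (linear) scheme that satisfies all users while meeting the individual security constraint: (1) $s=1$ and $m\geq 3$; (2) $s=2$ and $m\geq 5$; (3) $s=3$ and $m$ odd; (4) $s=m-2$ and $m$ odd.
   Context: Decentralized secure PICOD with circular shift side information. Fix integers $m\ge 2$ and $s\in[m-1]$ (where $[a]=\{1,\dots,a\}$). There are $m$ users $u_1,\dots,u_m$, no central transmitter, and $m$ independent messages $w_1,\dots,w_m$, each consisting of $\kappa\in\mathbb{N}$ independent uniformly distributed bits (for linear schemes, symbols of a finite field). User $u_i$ knows the messages $W_{A_i}=\{w_a: a\in A_i\}$ with $A_i=\{i,i+1,\dots,i+s-1\}$, indices taken modulo $m$ (in $[m]$); the collection of all $A_i$ is known to everyone. Users communicate over a shared noiseless broadcast channel, one at a time: user $u_j$ sends a codeword $x_j=\mathsf{ENC}_j(W_{A_j})$ of length $\ell_j\kappa$, and the total code-length is $\ell=\sum_j \ell_j$; let $x$ denote all transmitted codewords. Each user $u_j$ decodes $\widehat w_j=\mathsf{DEC}_j(W_{A_j},x)$; user $u_j$ is satisfied if $\widehat w_j=w_{d_j}$ for some $d_j\in[m]\setminus A_j$ (any message outside its side information). Individual security requires that for every user $u_j$, $I(W_i; x\mid W_{A_j})=0$ for all $i\in[m]\setminus(\{d_j\}\cup A_j)$, i.e., user $u_j$ obtains no information about any message outside its side information other than its decoded one. A scheme is feasible if all users are satisfied and the security constraint holds;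 $\kappa$ may be taken arbitrarily large. Linear encoding means each $\mathsf{ENC}_j$ is a linear map. *)

theory Defs
  imports Main
begin

definition side_info :: "nat \<Rightarrow> nat \<Rightarrow> nat \<Rightarrow> nat set" where
  "side_info m s i = {((i - 1 + t) mod m) + 1 | t. t < s}"

text \<open>Message assignments: message a (1 <= a <= m) is the vector (W a 0, ..., W a (kappa-1))
  over the finite field; all other entries are 0. Messages are uniform and independent,
  i.e. W is uniformly distributed over this (finite) set.\<close>
definition msg_space :: "nat \<Rightarrow> nat \<Rightarrow> (nat \<Rightarrow> nat \<Rightarrow> 'f::zero) set" where
  "msg_space m \<kappa> = {W. \<forall>a k. W a k \<noteq> 0 \<longrightarrow> a \<in> {1..m} \<and> k < \<kappa>}"

definition restr :: "nat set \<Rightarrow> (nat \<Rightarrow> nat \<Rightarrow> 'f::zero) \<Rightarrow> (nat \<Rightarrow> nat \<Rightarrow> 'f)" where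
  "restr S W = (\<lambda>a k. if a \<in> S then W a k else 0)"

definition lin_transmit ::
  "nat \<Rightarrow> nat \<Rightarrow> nat \<Rightarrow> (nat \<Rightarrow> nat) \<Rightarrow> (nat \<Rightarrow> nat \<Rightarrow> nat \<Rightarrow> nat \<Rightarrow> 'f::comm_ring_1)
     \<Rightarrow> (nat \<Rightarrow> nat \<Rightarrow> 'f) \<Rightarrow> (nat \<Rightarrow> nat \<Rightarrow> 'f)" where
  "lin_transmit m s \<kappa> L c W = (\<lambda>j r. if j \<in> {1..m} \<and> r < L j
      then (\<Sum>a\<in>side_info m s j. \<Sum>k<\<kappa>. c j r a k * W a k) else 0)"

text \<open>Conditional independence of X and Y given Z when the underlying outcome is uniform
  on the finite set \<Omega>: P(x,y,z) P(z) = P(x,z) P(y,z) for all values; this is exactly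
  I(X;Y|Z) = 0.\<close>
definition cond_indep_unif ::
  "'w set \<Rightarrow> ('w \<Rightarrow> 'x) \<Rightarrow> ('w \<Rightarrow> 'y) \<Rightarrow> ('w \<Rightarrow> 'z) \<Rightarrow> bool" where
  "cond_indep_unif \<Omega> X Y Z \<longleftrightarrow> (\<forall>x y z.
      card {w\<in>\<Omega>. X w = x \<and> Y w = y \<and> Z w = z} * card {w\<in>\<Omega>. Z w = z}
    = card {w\<in>\<Omega>. X w = x \<and> Z w = z} * card {w\<in>\<Omega>. Y w = y \<and> Z w = z})"

definition feasible_linear ::
  "nat \<Rightarrow> nat \<Rightarrow> nat \<Rightarrow> (nat \<Rightarrow> nat) \<Rightarrow> (nat \<Rightarrow> nat \<Rightarrow> nat \<Rightarrow> nat \<Rightarrow> 'f::{field,finite}) \<Rightarrow> bool" where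
  "feasible_linear m s \<kappa> L c \<longleftrightarrow>
     (\<forall>j\<in>{1..m}. \<exists>d\<in>{1..m} - side_info m s j.
        (\<exists>DEC :: (nat \<Rightarrow> nat \<Rightarrow> 'f) \<Rightarrow> (nat \<Rightarrow> nat \<Rightarrow> 'f) \<Rightarrow> (nat \<Rightarrow> 'f).
           \<forall>W\<in>(msg_space m \<kappa> :: (nat \<Rightarrow> nat \<Rightarrow> 'f) set).
             DEC (restr (side_info m s j) W) (lin_transmit m s \<kappa> L c W) = W d)
      \<and> (\<forall>i\<in>{1..m} - ({d} \<union> side_info m s j).
           cond_indep_unif (msg_space m \<kappa> :: (nat \<Rightarrow> nat \<Rightarrow> 'f) set)
             (\<lambda>W. W i) (lin_transmit m s \<kappa> L c) (\<lambda>W. restr (side_info m s j) W)))"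

end

theory Submission
  imports Defs
begin


lemma finite_msg_space: "finite (msg_space m \<kappa> :: (nat \<Rightarrow> nat \<Rightarrow> 'f::{zero,finite}) set)"
proof -
  let ?I = "{g :: nat \<Rightarrow> 'f. \<forall>k. (k \<in> {..<\<kappa>} \<longrightarrow> g k \<in> UNIV) \<and> (k \<notin> {..<\<kappa>} \<longrightarrow> g k = 0)}"
  have fI: "finite ?I" by (rule finite_set_of_finite_funs) auto
  let ?O = "{W :: nat \<Rightarrow> nat \<Rightarrow> 'f. \<forall>a. (a \<in> {1..m} \<longrightarrow> W a \<in> ?I) \<and> (a \<notin> {1..m} \<longrightarrow> W a = (\<lambda>k. 0))}"
  have fO: "finite ?O" by (rule finite_set_of_finite_funs) (use fI in auto)
  have "msg_space m \<kappa> \<subseteq> ?O"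
    unfolding msg_space_def by (auto simp: fun_eq_iff)
  then show ?thesis using fO finite_subset by blast
qed


definition dsub :: "(nat \<Rightarrow> nat \<Rightarrow> 'f::ab_group_add) \<Rightarrow> (nat \<Rightarrow> nat \<Rightarrow> 'f) \<Rightarrow> (nat \<Rightarrow> nat \<Rightarrow> 'f)" where
  "dsub D1 D2 = (\<lambda>a k. D1 a k - D2 a k)"

locale scheme =
  fixes m s \<kappa> :: nat and L :: "nat \<Rightarrow> nat"
    and c :: "nat \<Rightarrow> nat \<Rightarrow> nat \<Rightarrow> nat \<Rightarrow> 'f::{field,finite}"
    and dec :: "nat \<Rightarrow> nat"
  assumes m2: "m \<ge> 2" and s1: "1 \<le> s" and sm: "s \<le> m - 1" and k1: "\<kappa> \<ge> 1"
    and dec_out: "\<And>j. j \<in> {1..m} \<Longrightarrow> dec j \<in> {1..m} - side_info m s j"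
    and dec_ok: "\<And>j. j \<in> {1..m} \<Longrightarrow> \<exists>DEC :: (nat \<Rightarrow> nat \<Rightarrow> 'f) \<Rightarrow> (nat \<Rightarrow> nat \<Rightarrow> 'f) \<Rightarrow> (nat \<Rightarrow> 'f).
           \<forall>W\<in>(msg_space m \<kappa> :: (nat \<Rightarrow> nat \<Rightarrow> 'f) set).
             DEC (restr (side_info m s j) W) (lin_transmit m s \<kappa> L c W) = W (dec j)"
    and sec_ok: "\<And>j i. j \<in> {1..m} \<Longrightarrow> i \<in> {1..m} - ({dec j} \<union> side_info m s j) \<Longrightarrow>
           cond_indep_unif (msg_space m \<kappa> :: (nat \<Rightarrow> nat \<Rightarrow> 'f) set)
             (\<lambda>W. W i) (lin_transmit m s \<kappa> L c) (\<lambda>W. restr (side_info m s j) W)"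
begin

abbreviation MS :: "(nat \<Rightarrow> nat \<Rightarrow> 'f) set" where "MS \<equiv> msg_space m \<kappa>"
abbreviation tx :: "(nat \<Rightarrow> nat \<Rightarrow> 'f) \<Rightarrow> (nat \<Rightarrow> nat \<Rightarrow> 'f)" where "tx \<equiv> lin_transmit m s \<kappa> L c"

definition N :: "(nat \<Rightarrow> nat \<Rightarrow> 'f) set" where "N = {D \<in> MS. tx D = (\<lambda>j r. 0)}"

abbreviation Z :: "nat \<Rightarrow> 'f" where "Z \<equiv> (\<lambda>k. 0)"

lemma finMS: "finite MS" by (rule finite_msg_space)

lemma zero_MS: "(\<lambda>a k. 0) \<in> MS" unfolding msg_space_def by auto

lemma tx_zero: "tx (\<lambda>a k. 0) = (\<lambda>j r. 0)" unfolding lin_transmit_def by (auto simp: fun_eq_iff)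

lemma zero_N: "(\<lambda>a k. 0) \<in> N" unfolding N_def using zero_MS tx_zero by auto

lemma MS_sub: "D1 \<in> MS \<Longrightarrow> D2 \<in> MS \<Longrightarrow> dsub D1 D2 \<in> MS"
  unfolding msg_space_def dsub_def by auto (metis diff_self)+

lemma tx_sub: "tx (dsub D1 D2) = (\<lambda>j r. tx D1 j r - tx D2 j r)"
  unfolding lin_transmit_def dsub_def
  by (auto simp: fun_eq_iff right_diff_distrib sum_subtractf)

lemma N_sub: "D1 \<in> N \<Longrightarrow> D2 \<in> N \<Longrightarrow> dsub D1 D2 \<in> N"
  unfolding N_def using MS_sub tx_sub by auto

lemma N_MS: "D \<in> N \<Longrightarrow> D \<in> MS" unfolding N_def by auto

lemma window:
  assumes E: "E \<in> MS"
    and W: "\<And>j. j \<in> {1..m} \<Longrightarrow> \<exists>D\<in>N. \<forall>a\<in>side_info m s j. E a = D a"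
  shows "E \<in> N"
proof -
  have "tx E j r = 0" for j r
  proof (cases "j \<in> {1..m} \<and> r < L j")
    case True
    then obtain D where D: "D \<in> N" "\<forall>a\<in>side_info m s j. E a = D a" using W by blast
    have "tx E j r = tx D j r"
      using True D(2) unfolding lin_transmit_def by (auto intro!: sum.cong)
    also have "\<dots> = 0" using D(1) unfolding N_def by auto
    finally show ?thesis .
  next
    case False then show ?thesis unfolding lin_transmit_def by auto
  qed
  then show ?thesis unfolding N_def using E by auto
qed

lemma restr_zero: "(\<forall>a\<in>S. D a = Z) \<Longrightarrow> restr S D = (\<lambda>a k. 0)"
  unfolding restr_def by (auto simp: fun_eq_iff)

lemma Dec:
  assumes j: "j \<in> {1..m}" and D: "D \<in> N" and z: "\<forall>a\<in>side_info m s j. D a = Z"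
  shows "D (dec j) = Z"
proof -
  obtain DEC :: "(nat \<Rightarrow> nat \<Rightarrow> 'f) \<Rightarrow> (nat \<Rightarrow> nat \<Rightarrow> 'f) \<Rightarrow> (nat \<Rightarrow> 'f)" where
    DEC: "\<forall>W\<in>MS. DEC (restr (side_info m s j) W) (tx W) = W (dec j)"
    using dec_ok[OF j] by blast
  have "D (dec j) = DEC (restr (side_info m s j) D) (tx D)" using DEC N_MS[OF D] by auto
  also have "\<dots> = DEC (restr (side_info m s j) (\<lambda>a k. 0)) (tx (\<lambda>a k. 0))"
    using restr_zero[OF z] restr_zero[of "side_info m s j" "\<lambda>a k. 0"] D tx_zero
    unfolding N_def by auto
  also have "\<dots> = Z" using DEC zero_MS by auto
  finally show ?thesis .
qed

lemma Sec:
  assumes j: "j \<in> {1..m}" and i: "i \<in> {1..m}" and iA: "i \<notin> side_info m s j" and id: "i \<noteq> dec j"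
    and v: "\<forall>k. \<kappa> \<le> k \<longrightarrow> v k = 0"
  shows "\<exists>D\<in>N. (\<forall>a\<in>side_info m s j. D a = Z) \<and> D i = v"
proof -
  let ?A = "side_info m s j"
  have ci: "cond_indep_unif MS (\<lambda>W. W i) tx (\<lambda>W. restr ?A W)"
    using sec_ok[OF j] i iA id by auto
  let ?S1 = "{W\<in>MS. W i = v \<and> tx W = (\<lambda>j r. 0) \<and> restr ?A W = (\<lambda>a k. 0)}"
  let ?S2 = "{W\<in>MS. restr ?A W = (\<lambda>a k. 0)}"
  let ?S3 = "{W\<in>MS. W i = v \<and> restr ?A W = (\<lambda>a k. 0)}"
  let ?S4 = "{W\<in>MS. tx W = (\<lambda>j r. 0) \<and> restr ?A W = (\<lambda>a k. 0)}"
  have eq: "card ?S1 * card ?S2 = card ?S3 * card ?S4"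
    using ci unfolding cond_indep_unif_def by blast
  let ?W0 = "(\<lambda>a k. if a = i then v k else (0::'f))"
  have W0: "?W0 \<in> ?S3"
    using i v iA unfolding msg_space_def restr_def by (auto simp: fun_eq_iff) (meson not_le)
  have z4: "(\<lambda>a k. 0) \<in> ?S4" using zero_MS tx_zero unfolding restr_def by auto
  have "finite ?S3" "finite ?S4" using finMS by auto
  then have "card ?S3 > 0" "card ?S4 > 0" using W0 z4 card_gt_0_iff by blast+
  then have "card ?S3 * card ?S4 > 0" by simp
  then have "card ?S1 * card ?S2 > 0" using eq by simp
  then have "card ?S1 \<noteq> 0" by (cases "card ?S1 = 0") simp_all
  then have "?S1 \<noteq> {}" by (intro notI) simp
  then obtain W where W: "W \<in> ?S1" by blast
  then have "W \<in> N" unfolding N_def by auto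
  moreover have "\<forall>a\<in>?A. W a = Z"
  proof
    fix a assume "a \<in> ?A"
    then show "W a = Z" using W unfolding restr_def by (auto simp: fun_eq_iff) metis
  qed
  ultimately show ?thesis using W by auto
qed


section \<open>Integer indexing\<close>

definition u :: "int \<Rightarrow> nat" where "u y = nat (y mod int m) + 1"

lemma mpos: "int m > 0" using m2 by simp

lemma u_range: "u y \<in> {1..m}"
proof -
  have "y mod int m < int m" using mpos by simp
  then have "nat (y mod int m) < m" using mpos by (simp add: nat_less_iff)
  then show ?thesis unfolding u_def by simp
qed

lemma u_eq: "u a = u b \<longleftrightarrow> (a - b) mod int m = 0"
proof -
  have "u a = u b \<longleftrightarrow> a mod int m = b mod int m"
    unfolding u_def using mpos by (simp add: eq_nat_nat_iff)
  also have "\<dots> \<longleftrightarrow> (a - b) mod int m = 0"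
    by (simp only: mod_eq_dvd_iff dvd_eq_mod_eq_0)
  finally show ?thesis .
qed

lemma u_surj: "a \<in> {1..m} \<Longrightarrow> u (int a - 1) = a"
  unfolding u_def by auto

lemma side_u: "side_info m s (u y) = {u (y + int t) | t. t < s}"
proof -
  have "((u y - 1 + t) mod m) + 1 = u (y + int t)" for t
  proof -
    have "int ((nat (y mod int m) + t) mod m) = (y + int t) mod int m"
      using mpos by (simp add: zmod_int mod_add_left_eq)
    then show ?thesis unfolding u_def by simp
  qed
  then show ?thesis unfolding side_info_def by auto
qed

lemma memA: "u z \<in> side_info m s (u y) \<longleftrightarrow> (z - y) mod int m < int s"
proof
  assume "u z \<in> side_info m s (u y)"
  then obtain t where t: "t < s" "u z = u (y + int t)" using side_u by auto
  then have "(z - y - int t) mod int m = 0" using u_eq by (simp add: algebra_simps)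
  then have "(z - y) mod int m = int t mod int m" by (simp add: mod_eq_dvd_iff dvd_eq_mod_eq_0)
  also have "\<dots> = int t" using t sm m2 by (simp add: mod_pos_pos_trivial)
  finally show "(z - y) mod int m < int s" using t by simp
next
  assume h: "(z - y) mod int m < int s"
  let ?t = "nat ((z - y) mod int m)"
  have t: "?t < s" using h mpos by (simp add: nat_less_iff)
  have "int ?t = (z - y) mod int m" using mpos by simp
  have "z - (y + (z - y) mod int m) = int m * ((z - y) div int m)"
    using minus_mod_eq_mult_div[of "z - y" "int m"] by (simp add: algebra_simps)
  then have "u z = u (y + int ?t)" unfolding u_eq using \<open>int ?t = _\<close> by simp
  then show "u z \<in> side_info m s (u y)" unfolding side_u using t by blast
qed


lemma mod_small: "0 \<le> a \<Longrightarrow> a < int m \<Longrightarrow> a mod int m = a"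
  by (simp add: mod_pos_pos_trivial)

lemma mod_negsmall: "- int m \<le> a \<Longrightarrow> a < 0 \<Longrightarrow> a mod int m = a + int m"
proof -
  assume "- int m \<le> a" "a < 0"
  then have "(a + int m) mod int m = a + int m" by (intro mod_small) auto
  then show ?thesis by simp
qed

lemma mod_nn: "0 \<le> a mod int m" "a mod int m < int m"
  using mpos by auto

lemma modr: "x mod int m = r \<Longrightarrow> (x + e) mod int m = (r + e) mod int m"
  by (metis mod_add_left_eq)

lemma modr': "x mod int m = r \<Longrightarrow> (x - e) mod int m = (r - e) mod int m"
  by (metis mod_diff_left_eq)

lemma u_sub: "u (int a - 1) = a" if "a \<in> {1..m}" using u_surj that by simp

lemma side_sub: "side_info m s j \<subseteq> {1..m}" if "j \<in> {1..m}"
  using side_u[of "int j - 1"] u_surj[OF that] u_range by auto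

definition zA :: "(nat \<Rightarrow> nat \<Rightarrow> 'f) \<Rightarrow> int \<Rightarrow> bool" where
  "zA D y \<longleftrightarrow> (\<forall>w. (w - y) mod int m < int s \<longrightarrow> D (u w) = Z)"

lemma DecU: assumes "D \<in> N" "zA D y" shows "D (dec (u y)) = Z"
proof (rule Dec[OF u_range assms(1)])
  show "\<forall>a\<in>side_info m s (u y). D a = Z"
  proof
    fix a assume a: "a \<in> side_info m s (u y)"
    then have a1: "a \<in> {1..m}" using side_sub u_range by blast
    then have "u (int a - 1) \<in> side_info m s (u y)" using a u_surj by simp
    then have "(int a - 1 - y) mod int m < int s" using memA by blast
    then have "D (u (int a - 1)) = Z" using assms(2) unfolding zA_def by blast
    then show "D a = Z" using u_surj[OF a1] by simp
  qed
qed

definition dz :: "int \<Rightarrow> int" where "dz y = int (dec (u y)) - 1"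

lemma dz_u: "u (dz y) = dec (u y)"
  unfolding dz_def using dec_out[OF u_range] u_surj by auto

lemma dz_out: "(dz y - y) mod int m \<ge> int s"
proof -
  have "dec (u y) \<notin> side_info m s (u y)" using dec_out[OF u_range] by auto
  then have "u (dz y) \<notin> side_info m s (u y)" using dz_u by simp
  then show ?thesis using memA by (simp add: not_less)
qed

definition v0 :: "nat \<Rightarrow> 'f" where "v0 = (\<lambda>k. if k = 0 then 1 else 0)"

lemma v0_valid: "\<forall>k. \<kappa> \<le> k \<longrightarrow> v0 k = 0" unfolding v0_def using k1 by auto

lemma v0_nz: "v0 \<noteq> Z" unfolding v0_def by (auto simp: fun_eq_iff)

lemma SecU:
  assumes "(z - y) mod int m \<ge> int s" "u z \<noteq> dec (u y)" "\<forall>k. \<kappa> \<le> k \<longrightarrow> v k = 0"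
  shows "\<exists>D\<in>N. zA D y \<and> D (u z) = v"
proof -
  have nA: "u z \<notin> side_info m s (u y)" using memA assms(1) by simp
  obtain D where D: "D \<in> N" "\<forall>a\<in>side_info m s (u y). D a = Z" "D (u z) = v"
    using Sec[OF u_range u_range nA assms(2) assms(3)] by blast
  have "zA D y" unfolding zA_def using D(2) memA by blast
  then show ?thesis using D by blast
qed

lemma MS_val: "D \<in> MS \<Longrightarrow> \<forall>k. \<kappa> \<le> k \<longrightarrow> D a k = 0"
  unfolding msg_space_def by (auto simp: not_le[symmetric])

lemma windowU:
  assumes E: "E \<in> MS"
    and W: "\<And>y. \<exists>D\<in>N. \<forall>w. (w - y) mod int m < int s \<longrightarrow> E (u w) = D (u w)"
  shows "E \<in> N"
proof (rule window[OF E])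
  fix j assume j: "j \<in> {1..m}"
  obtain D where D: "D \<in> N" "\<forall>w. (w - (int j - 1)) mod int m < int s \<longrightarrow> E (u w) = D (u w)"
    using W by blast
  have "\<forall>a\<in>side_info m s j. E a = D a"
  proof
    fix a assume a: "a \<in> side_info m s j"
    then have a1: "a \<in> {1..m}" using side_sub j by blast
    have "u (int a - 1) \<in> side_info m s (u (int j - 1))" using a u_surj a1 j by simp
    then have "(int a - 1 - (int j - 1)) mod int m < int s" using memA by blast
    then show "E a = D a" using D(2) u_surj[OF a1] by metis
  qed
  then show "\<exists>D\<in>N. \<forall>a\<in>side_info m s j. E a = D a" using D(1) by blast
qed

lemma windowR:
  assumes E: "E \<in> MS"
    and W: "\<And>q. 0 \<le> q \<Longrightarrow> q < int m \<Longrightarrow> \<exists>D\<in>N. \<forall>t. 0 \<le> t \<longrightarrow> t < int s \<longrightarrow> E (u (j + q + t)) = D (u (j + q + t))"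
  shows "E \<in> N"
proof (rule windowU[OF E])
  fix y
  let ?o = "(y - j) mod int m"
  obtain D where D: "D \<in> N" "\<forall>t. 0 \<le> t \<longrightarrow> t < int s \<longrightarrow> E (u (j + ?o + t)) = D (u (j + ?o + t))"
    using W[of ?o] mod_nn by blast
  have "\<forall>w. (w - y) mod int m < int s \<longrightarrow> E (u w) = D (u w)"
  proof (intro allI impI)
    fix w assume w: "(w - y) mod int m < int s"
    let ?t = "(w - y) mod int m"
    have "u w = u (j + ?o + ?t)" unfolding u_eq
    proof -
      have "(w - (j + ?o + ?t)) mod int m = ((w - y) - (w - y) mod int m + ((y - j) - (y - j) mod int m)) mod int m"
        by (simp add: algebra_simps)
      also have "\<dots> = (int m * ((w - y) div int m) + int m * ((y - j) div int m)) mod int m"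
        by (simp add: minus_mod_eq_mult_div)
      also have "\<dots> = 0" by (metis mod_mult_self2_is_0 distrib_left mult.commute)
      finally show "(w - (j + ?o + ?t)) mod int m = 0" .
    qed
    then show "E (u w) = D (u w)" using D(2) w mod_nn by auto
  qed
  then show "\<exists>D\<in>N. \<forall>w. (w - y) mod int m < int s \<longrightarrow> E (u w) = D (u w)" using D(1) by blast
qed


lemma sm': "int s \<le> int m - 1" using sm m2 by linarith
lemma s1': "1 \<le> int s" using s1 by linarith

lemma G1a: assumes R: "dec (u y) = u (y + int s)" shows "dec (u (y+1)) = u y"
proof (rule ccontr)
  assume ne: "dec (u (y+1)) \<noteq> u y"
  define z where "z = dz (y+1)"
  have zu: "u z = dec (u (y+1))" using dz_u z_def by simp
  have out: "(z - (y+1)) mod int m \<ge> int s" using dz_out z_def by simp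
  define r where "r = (z - y) mod int m"
  have r0: "r \<noteq> 0"
  proof
    assume "r = 0"
    then have "u z = u y" using u_eq r_def by simp
    then show False using ne zu by simp
  qed
  have rb: "0 \<le> r" "r < int m" using mod_nn r_def by auto
  have "(z - (y+1)) mod int m = (r - 1) mod int m" using modr'[of "z-y" r 1] r_def by (simp add: algebra_simps)
  also have "\<dots> = r - 1" using mod_small r0 rb by simp
  finally have rs: "r \<ge> int s + 1" using out by simp
  have ne2: "u z \<noteq> dec (u y)"
  proof
    assume "u z = dec (u y)"
    then have "(z - (y + int s)) mod int m = 0" using R u_eq by simp
    moreover have "(z - (y + int s)) mod int m = (r - int s) mod int m"
      using modr'[of "z-y" r "int s"] r_def by (simp add: algebra_simps)
    moreover have "(r - int s) mod int m = r - int s" using rs rb s1' by (intro mod_small) auto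
    ultimately show False using rs by simp
  qed
  obtain D where D: "D \<in> N" "zA D y" "D (u z) = v0"
    using SecU[where y=y and z=z and v=v0] rs r_def ne2 v0_valid by auto
  have "zA D (y+1)" unfolding zA_def
  proof (intro allI impI)
    fix w assume w: "(w - (y + 1)) mod int m < int s"
    define q where "q = (w - y) mod int m"
    have qb: "0 \<le> q" "q < int m" using mod_nn q_def by auto
    have wq: "(w - (y + 1)) mod int m = (q - 1) mod int m"
      using modr'[of "w-y" q 1] q_def by (simp add: algebra_simps)
    show "D (u w) = Z"
    proof (cases "q = 0")
      case True
      then have "(w - (y + 1)) mod int m = int m - 1" using wq mod_negsmall mpos by simp
      then show ?thesis using w sm' by simp
    next
      case False
      then have "(q - 1) mod int m = q - 1" using qb by (intro mod_small) auto
      then have qs: "q \<le> int s" using w wq by simp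
      show ?thesis
      proof (cases "q < int s")
        case True then show ?thesis using D(2) q_def unfolding zA_def by blast
      next
        case False
        then have "q = int s" using qs by simp
        then have "(w - (y + int s)) mod int m = 0"
          using modr'[of "w-y" q "int s"] q_def by (simp add: algebra_simps)
        then have "u w = dec (u y)" using R u_eq by simp
        then show ?thesis using DecU[OF D(1) D(2)] by simp
      qed
    qed
  qed
  then have "D (dec (u (y+1))) = Z" using DecU D(1) by blast
  then show False using zu D(3) v0_nz by simp
qed

lemma G1b: assumes Lt: "dec (u y) = u (y - 1)" shows "dec (u (y - 1)) = u (y - 1 + int s)"
proof (rule ccontr)
  assume ne: "dec (u (y - 1)) \<noteq> u (y - 1 + int s)"
  define z where "z = dz (y - 1)"
  have zu: "u z = dec (u (y - 1))" using dz_u z_def by simp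
  have out: "(z - (y - 1)) mod int m \<ge> int s" using dz_out z_def by simp
  obtain r where r: "(z - (y - 1)) mod int m = r" by blast
  have rb: "0 \<le> r" "r < int m" using mod_nn r by auto
  have rne: "r \<noteq> int s"
  proof
    assume "r = int s"
    then have "(z - (y - 1 + int s)) mod int m = (int s - int s) mod int m"
      using modr'[OF r, of "int s"] by (simp add: diff_diff_eq)
    then have "u z = u (y - 1 + int s)" using u_eq by simp
    then show False using ne zu by simp
  qed
  have rs: "r \<ge> int s + 1" using out rne r by simp
  have "(z - y) mod int m = (r - 1) mod int m" using modr'[OF r, of 1] by simp
  also have "\<dots> = r - 1" using rs s1' rb by (intro mod_small) auto
  finally have zy: "(z - y) mod int m = r - 1" .
  have ne2: "u z \<noteq> dec (u y)"
  proof
    assume "u z = dec (u y)"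
    then have "(z - (y - 1)) mod int m = 0" using Lt u_eq by simp
    then show False using rs r s1' by simp
  qed
  obtain D where D: "D \<in> N" "zA D y" "D (u z) = v0"
    using SecU[where y=y and z=z and v=v0] rs zy ne2 v0_valid by auto
  have "zA D (y - 1)" unfolding zA_def
  proof (intro allI impI)
    fix w assume w: "(w - (y - 1)) mod int m < int s"
    obtain q where q: "(w - (y - 1)) mod int m = q" by blast
    have qb: "0 \<le> q" "q < int m" using mod_nn q by auto
    show "D (u w) = Z"
    proof (cases "q = 0")
      case True
      then have "u w = dec (u y)" using Lt u_eq q by simp
      then show ?thesis using DecU[OF D(1) D(2)] by simp
    next
      case False
      have "(w - y) mod int m = (q - 1) mod int m" using modr'[OF q, of 1] by simp
      also have "\<dots> = q - 1" using False qb by (intro mod_small) auto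
      finally have "(w - y) mod int m < int s" using w q by simp
      then show ?thesis using D(2) unfolding zA_def by blast
    qed
  qed
  then have "D (dec (u (y - 1))) = Z" using DecU D(1) by blast
  then show False using zu D(3) v0_nz by simp
qed

lemma u_cong: "(a - b) mod int m = 0 \<Longrightarrow> u a = u b" using u_eq by simp

lemma parity:
  assumes typed: "\<And>y. dec (u y) = u (y + int s) \<or> dec (u y) = u (y - 1)"
    and sm2: "int s \<le> int m - 2" and odd: "odd m"
  shows False
proof -
  have ne: "u (y + 1 + int s) \<noteq> u y" for y
  proof
    assume "u (y + 1 + int s) = u y"
    then have "(1 + int s) mod int m = 0" using u_eq by (simp add: algebra_simps)
    moreover have "(1 + int s) mod int m = 1 + int s" using sm2 s1' by (intro mod_small) auto
    ultimately show False using s1' by simp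
  qed
  have step: "dec (u (y + 2)) = u (y + 2 + int s)" if R: "dec (u y) = u (y + int s)" for y
  proof -
    have L1: "dec (u (y+1)) = u y" using G1a[OF R] .
    show ?thesis
    proof (rule ccontr)
      assume "dec (u (y + 2)) \<noteq> u (y + 2 + int s)"
      then have "dec (u (y + 2)) = u (y + 2 - 1)" using typed by blast
      then have "dec (u (y + 2 - 1)) = u (y + 2 - 1 + int s)" using G1b by blast
      then have "dec (u (y + 1)) = u (y + 1 + int s)" by (simp add: algebra_simps)
      then show False using L1 ne[of y] by auto
    qed
  qed
  have iter: "dec (u (y + 2 * int i)) = u (y + 2 * int i + int s)" if R: "dec (u y) = u (y + int s)" for y i
  proof (induction i)
    case 0 then show ?case using R by simp
  next
    case (Suc i)
    then have "dec (u (y + 2 * int i + 2)) = u (y + 2 * int i + 2 + int s)" using step by blast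
    then show ?case by (simp add: algebra_simps)
  qed
  obtain y0 where R0: "dec (u y0) = u (y0 + int s)"
  proof (cases "dec (u 0) = u (0 + int s)")
    case True then show ?thesis using that by blast
  next
    case False
    then have "dec (u 0) = u (0 - 1)" using typed by blast
    then have "dec (u (0 - 1)) = u (0 - 1 + int s)" using G1b by blast
    then show ?thesis using that by blast
  qed
  obtain k where k: "m = 2 * k + 1" using odd by (metis oddE)
  have "dec (u (y0 + 2 * int k)) = u (y0 + 2 * int k + int s)" using iter[OF R0] .
  moreover have "u (y0 + 2 * int k) = u (y0 - 1)" using k by (intro u_cong) (simp add: algebra_simps)
  moreover have "u (y0 + 2 * int k + int s) = u (y0 - 1 + int s)" using k by (intro u_cong) (simp add: algebra_simps)
  ultimately have "dec (u (y0 - 1)) = u (y0 - 1 + int s)" by simp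
  then have "dec (u (y0 - 1 + 1)) = u (y0 - 1)" using G1a by blast
  then have "dec (u y0) = u (y0 - 1)" by simp
  then have "u (y0 - 1 + 1 + int s) = u (y0 - 1)" using R0 by simp
  then show False using ne by blast
qed

end



context scheme begin

lemma single_MS: "D \<in> MS \<Longrightarrow> (\<lambda>a. if a = u z then D (u z) else Z) \<in> MS"
  using u_range unfolding msg_space_def by auto

lemma SBdec:
  assumes E: "(\<lambda>a. if a = u z then v else Z) \<in> N" and v: "v \<noteq> Z"
    and out: "(z - y) mod int m \<ge> int s"
  shows "dec (u y) \<noteq> u z"
proof
  assume d: "dec (u y) = u z"
  have "zA (\<lambda>a. if a = u z then v else Z) y" unfolding zA_def
  proof (intro allI impI)
    fix w assume w: "(w - y) mod int m < int s"
    have "u w \<noteq> u z"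
    proof
      assume "u w = u z"
      then have "(w - z) mod int m = 0" using u_eq by blast
      then have "(w - z + (z - y)) mod int m = (0 + (z - y)) mod int m" by (rule modr)
      then have "(w - y) mod int m = (z - y) mod int m" by simp
      then show False using w out by simp
    qed
    then show "(if u w = u z then v else Z) = Z" by simp
  qed
  then have "(\<lambda>a. if a = u z then v else Z) (dec (u y)) = Z" using DecU[OF E] by blast
  then show False using d v by simp
qed

lemma pop:
  assumes nf: "\<forall>X\<in>N. X (u z) = Z" and out: "(z - y) mod int m \<ge> int s"
  shows "dec (u y) = u z"
proof (rule ccontr)
  assume "dec (u y) \<noteq> u z"
  then obtain D where "D \<in> N" "D (u z) = v0" using SecU[where y=y and z=z and v=v0] out v0_valid by auto
  then show False using nf v0_nz by auto
qed

section \<open>Case s = m - 2\<close>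

lemma case_m2: assumes sm2: "s = m - 2" and odd: "odd m" shows False
proof (rule parity)
  show "int s \<le> int m - 2" using sm2 m2 by simp
  show "odd m" by (rule odd)
  fix y
  obtain r where r: "(dz y - y) mod int m = r" by blast
  have rb: "r \<ge> int s" "r < int m" using dz_out mod_nn r by auto
  then have "r = int m - 2 \<or> r = int m - 1" using sm2 m2 by auto
  then show "dec (u y) = u (y + int s) \<or> dec (u y) = u (y - 1)"
  proof
    assume "r = int m - 2"
    moreover have "int s = int m - 2" using sm2 m2 by simp
    ultimately have "(dz y - y - int s) mod int m = 0"
      using modr'[OF r, of "int s"] by simp
    then have "u (dz y) = u (y + int s)" unfolding u_eq by (simp add: diff_diff_eq)
    then show ?thesis using dz_u by simp
  next
    assume "r = int m - 1"
    then have "(dz y - y + 1) mod int m = 0"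
      using modr[OF r, of 1] by simp
    moreover have e: "dz y - (y - 1) = dz y - y + 1" by simp
    ultimately have "(dz y - (y - 1)) mod int m = 0" by metis
    then have "u (dz y) = u (y - 1)" unfolding u_eq .
    then show ?thesis using dz_u by simp
  qed
qed


lemma modv: "x = e \<Longrightarrow> 0 \<le> e \<Longrightarrow> e < int m \<Longrightarrow> x mod int m = e"
  by (simp add: mod_small)
lemma modvn: "x = e \<Longrightarrow> - int m \<le> e \<Longrightarrow> e < 0 \<Longrightarrow> x mod int m = e + int m"
  by (simp add: mod_negsmall)
lemma u_neq: "a - b = e \<Longrightarrow> 0 < e \<Longrightarrow> e < int m \<Longrightarrow> u a \<noteq> u b"
  unfolding u_eq by (simp add: mod_small)
lemma u_neqn: "a - b = e \<Longrightarrow> 0 < - e \<Longrightarrow> - e < int m \<Longrightarrow> u a \<noteq> u b"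
  unfolding u_eq by (simp add: mod_negsmall)
lemma u_eqc: "a - b = e \<Longrightarrow> e mod int m = 0 \<Longrightarrow> u a = u b"
  unfolding u_eq by simp

lemma dsub_app: "dsub X G a = (\<lambda>k. X a k - G a k)" unfolding dsub_def by simp

section \<open>Case s = 2\<close>

lemma SB2:
  assumes s2: "s = 2" and X: "X \<in> N" and F: "F \<in> N" and G: "G \<in> N"
   and FZ: "F (u z) = Z" and F1: "F (u (z - 1)) = X (u (z - 1))"
   and GZ: "G (u z) = Z" and G1: "G (u (z + 1)) = X (u (z + 1))"
  shows "(\<lambda>a. if a = u z then X (u z) else Z) \<in> N" (is "?E \<in> N")
proof (rule windowR[where j = z])
  show "?E \<in> MS" by (rule single_MS[OF N_MS[OF X]])
  fix q assume q: "0 \<le> q" "q < int m"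
  show "\<exists>D\<in>N. \<forall>t. 0 \<le> t \<longrightarrow> t < int s \<longrightarrow> ?E (u (z + q + t)) = D (u (z + q + t))"
  proof (cases "q = 0")
    case True
    have "\<forall>t. 0 \<le> t \<longrightarrow> t < int s \<longrightarrow> ?E (u (z + q + t)) = dsub X G (u (z + q + t))"
    proof (intro allI impI)
      fix t :: int assume t: "0 \<le> t" "t < int s"
      then have "t = 0 \<or> t = 1" using s2 by auto
      then show "?E (u (z + q + t)) = dsub X G (u (z + q + t))"
      proof
        assume "t = 0" then show ?thesis using True GZ by (simp add: dsub_app)
      next
        assume t1: "t = 1"
        have "u (z + 1) \<noteq> u z" by (rule u_neq[of _ _ 1]) (use m2 in auto)
        then show ?thesis using True t1 G1 by (simp add: dsub_app)
      qed
    qed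
    then show ?thesis using N_sub[OF X G] by blast
  next
    case False
    show ?thesis
    proof (cases "q = int m - 1")
      case True
      have "\<forall>t. 0 \<le> t \<longrightarrow> t < int s \<longrightarrow> ?E (u (z + q + t)) = dsub X F (u (z + q + t))"
      proof (intro allI impI)
        fix t :: int assume t: "0 \<le> t" "t < int s"
        then have "t = 0 \<or> t = 1" using s2 by auto
        then show "?E (u (z + q + t)) = dsub X F (u (z + q + t))"
        proof
          assume t0: "t = 0"
          have e: "u (z + q + t) = u (z - 1)" by (rule u_eqc[of _ _ "int m"]) (use True t0 in auto)
          have "u (z - 1) \<noteq> u z" by (rule u_neqn[of _ _ "-1"]) (use m2 in auto)
          then show ?thesis using e F1 by (simp add: dsub_app)
        next
          assume t1: "t = 1"
          have e: "u (z + q + t) = u z" by (rule u_eqc[of _ _ "int m"]) (use True t1 in auto)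
          then show ?thesis using FZ by (simp add: dsub_app)
        qed
      qed
      then show ?thesis using N_sub[OF X F] by blast
    next
      case False2: False
      have "\<forall>t. 0 \<le> t \<longrightarrow> t < int s \<longrightarrow> ?E (u (z + q + t)) = (\<lambda>a k. 0) (u (z + q + t))"
      proof (intro allI impI)
        fix t :: int assume t: "0 \<le> t" "t < int s"
        have "u (z + q + t) \<noteq> u z" by (rule u_neq[of _ _ "q + t"]) (use t s2 q False False2 in auto)
        then show "?E (u (z + q + t)) = (\<lambda>a k. 0) (u (z + q + t))" by simp
      qed
      then show ?thesis by (rule bexI[OF _ zero_N])
    qed
  qed
qed

lemma dec_outU: "dec (u y) = u z \<Longrightarrow> (z - y) mod int m \<ge> int s"
proof -
  assume "dec (u y) = u z"
  then have "u z \<notin> side_info m s (u y)" using dec_out[OF u_range[of y]] by simp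
  then show ?thesis unfolding memA by simp
qed


lemma modsh: "(a - y) mod int m = r \<Longrightarrow> b - y = (a - y) + e \<Longrightarrow> 0 \<le> r + e \<Longrightarrow> r + e < int m \<Longrightarrow> (b - y) mod int m = r + e"
  by (metis modr mod_small)

lemma valX: "X \<in> N \<Longrightarrow> \<forall>k. \<kappa> \<le> k \<longrightarrow> X a k = 0"
  using MS_val N_MS by blast

lemma zA_self: "zA D y \<Longrightarrow> D (u y) = Z"
  unfolding zA_def using s1' mpos by auto

lemma u_eq_off: "(z - y) mod int m = e \<Longrightarrow> u z = u (y + e)"
proof -
  assume h: "(z - y) mod int m = e"
  have "(z - y - e) mod int m = (e - e) mod int m" by (rule modr'[OF h])
  then have "(z - (y + e)) mod int m = 0" by (simp add: diff_diff_eq)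
  then show ?thesis unfolding u_eq .
qed

lemma u_eq_offn: "(z - y) mod int m = int m - e \<Longrightarrow> u z = u (y - e)"
proof -
  assume h: "(z - y) mod int m = int m - e"
  have "(z - y + e) mod int m = (int m - e + e) mod int m" by (rule modr[OF h])
  then have "(z - (y - e)) mod int m = 0" by (simp add: diff_diff_eq2 algebra_simps)
  then show ?thesis unfolding u_eq .
qed

lemma a2:
  assumes s2: "s = 2" and d: "dec (u y) = u z" and r: "(z - y) mod int m = r" and i1: "r \<noteq> 2" and i2: "r \<noteq> int m - 1"
    and X: "X \<in> N" "X (u z) \<noteq> Z"
  shows False
proof -
  have rb: "r \<ge> 2" "r < int m" using dec_outU[OF d] r s2 mod_nn[of "z - y"] by auto
  then have r3: "3 \<le> r" "r \<le> int m - 2" using i1 i2 by auto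
  have m1: "(z - 1 - y) mod int m = r + (-1)" by (rule modsh[OF r]) (use r3 in auto)
  have n1: "u (z - 1) \<noteq> dec (u y)" unfolding d by (rule u_neqn[of _ _ "-1"]) (use m2 in auto)
  obtain F where F: "F \<in> N" "zA F y" "F (u (z - 1)) = X (u (z - 1))"
    using SecU[where y=y and z="z - 1" and v="X (u (z - 1))"] m1 r3 s2 n1 valX[OF X(1)] by auto
  have p1: "(z + 1 - y) mod int m = r + 1" by (rule modsh[OF r]) (use r3 in auto)
  have n2: "u (z + 1) \<noteq> dec (u y)" unfolding d by (rule u_neq[of _ _ 1]) (use m2 in auto)
  obtain G where G: "G \<in> N" "zA G y" "G (u (z + 1)) = X (u (z + 1))"
    using SecU[where y=y and z="z + 1" and v="X (u (z + 1))"] p1 r3 s2 n2 valX[OF X(1)] by auto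
  have FZ: "F (u z) = Z" using DecU[OF F(1) F(2)] d by simp
  have GZ: "G (u z) = Z" using DecU[OF G(1) G(2)] d by simp
  have E: "(\<lambda>a. if a = u z then X (u z) else Z) \<in> N"
    by (rule SB2[OF s2 X(1) F(1) G(1) FZ F(3) GZ G(3)])
  have "dec (u y) \<noteq> u z" by (rule SBdec[OF E X(2)]) (use r rb s2 in auto)
  then show False using d by simp
qed

lemma b2:
  assumes s2: "s = 2" and m4: "m \<ge> 4" and d: "dec (u y) = u (y + 2)" and X: "X \<in> N" "X (u (y + 2)) \<noteq> Z"
  shows "dec (u (y + 2)) = u (y + 1)"
proof (rule ccontr)
  assume ne: "dec (u (y + 2)) \<noteq> u (y + 1)"
  have m1: "(y + 1 - (y + 2)) mod int m = -1 + int m" by (rule modvn) (use m2 in auto)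
  obtain F where F: "F \<in> N" "zA F (y + 2)" "F (u (y + 1)) = X (u (y + 1))"
    using SecU[where y="y + 2" and z="y + 1" and v="X (u (y + 1))"] m1 s2 m4 ne valX[OF X(1)] by auto
  have m3: "(y + 3 - y) mod int m = 3" by (rule modv) (use m4 in auto)
  have n3: "u (y + 3) \<noteq> dec (u y)" unfolding d by (rule u_neq[of _ _ 1]) (use m2 in auto)
  obtain G where G: "G \<in> N" "zA G y" "G (u (y + 3)) = X (u (y + 3))"
    using SecU[where y=y and z="y + 3" and v="X (u (y + 3))"] m3 s2 n3 valX[OF X(1)] by auto
  have FZ: "F (u (y + 2)) = Z" using zA_self[OF F(2)] .
  have GZ: "G (u (y + 2)) = Z" using DecU[OF G(1) G(2)] d by simp
  have e1: "y + 2 - 1 = y + 1" by simp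
  have F1: "F (u (y + 2 - 1)) = X (u (y + 2 - 1))" unfolding e1 by (rule F(3))
  have e3: "y + 2 + 1 = y + 3" by simp
  have G1: "G (u (y + 2 + 1)) = X (u (y + 2 + 1))" unfolding e3 by (rule G(3))
  have E: "(\<lambda>a. if a = u (y + 2) then X (u (y + 2)) else Z) \<in> N"
    by (rule SB2[OF s2 X(1) F(1) G(1) FZ F1 GZ G1])
  have "(y + 2 - y) mod int m = 2" by (rule modv) (use m4 in auto)
  then have "dec (u y) \<noteq> u (y + 2)" by (intro SBdec[OF E X(2)]) (use s2 in auto)
  then show False using d by simp
qed


lemma case_s2: assumes s2: "s = 2" and m5: "m \<ge> 5" shows False
proof (cases "\<exists>y. \<forall>X\<in>N. X (dec (u y)) = Z")
  case True
  then obtain y0 where y0: "\<forall>X\<in>N. X (dec (u y0)) = Z" by blast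
  define z0 where "z0 = dz y0"
  have nf: "\<forall>X\<in>N. X (u z0) = Z" using y0 dz_u z0_def by simp
  have pop2: "dec (u y) = u z0" if "(z0 - y) mod int m \<ge> 2" for y
    using pop[OF nf] that s2 by simp
  have "(z0 - (z0 + 1)) mod int m = -1 + int m" by (rule modvn) (use m5 in auto)
  then have "dec (u (z0 + 1)) = u z0" using pop2 m5 by simp
  then have "dec (u (z0 + 1)) = u (z0 + 1 - 1)" by simp
  then have "dec (u (z0 + 1 - 1)) = u (z0 + 1 - 1 + int s)" by (rule G1b)
  then have R0: "dec (u z0) = u (z0 + 2)" using s2 by simp
  have "(z0 - (z0 + 3)) mod int m = -3 + int m" by (rule modvn) (use m5 in auto)
  then have d3: "dec (u (z0 + 3)) = u z0" using pop2 m5 by simp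
  have "(z0 + 2 - (z0 + 3)) mod int m = -1 + int m" by (rule modvn) (use m5 in auto)
  moreover have "u (z0 + 2) \<noteq> dec (u (z0 + 3))" unfolding d3 by (rule u_neq[of _ _ 2]) (use m5 in auto)
  ultimately obtain X where X: "X \<in> N" "X (u (z0 + 2)) = v0"
    using SecU[where y="z0 + 3" and z="z0 + 2" and v=v0] v0_valid s2 m5 by auto
  have b: "dec (u (z0 + 2)) = u (z0 + 1)" by (rule b2[OF s2 _ R0 X(1)]) (use X v0_nz m5 in auto)
  have "(z0 - (z0 + 2)) mod int m = -2 + int m" by (rule modvn) (use m5 in auto)
  then have "dec (u (z0 + 2)) = u z0" using pop2 m5 by simp
  moreover have "u (z0 + 1) \<noteq> u z0" by (rule u_neq[of _ _ 1]) (use m5 in auto)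
  ultimately show False using b by simp
next
  case False
  then have fr: "\<forall>y. \<exists>X\<in>N. X (dec (u y)) \<noteq> Z" by blast
  have typed: "dec (u y) = u (y + 2) \<or> dec (u y) = u (y - 1)" for y
  proof -
    obtain r where r: "(dz y - y) mod int m = r" by blast
    obtain X where X: "X \<in> N" "X (u (dz y)) \<noteq> Z" using fr dz_u by metis
    show ?thesis
    proof (cases "r = 2")
      case True
      then have "u (dz y) = u (y + 2)" using u_eq_off r by blast
      then show ?thesis using dz_u by simp
    next
      case F2: False
      show ?thesis
      proof (cases "r = int m - 1")
        case True
        then have "u (dz y) = u (y - 1)" using u_eq_offn r by blast
        then show ?thesis using dz_u by simp
      next
        case False
        then show ?thesis using a2[OF s2 dz_u[symmetric] r F2 False X] by blast
      qed
    qed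
  qed
  obtain y where R: "dec (u y) = u (y + 2)"
  proof (cases "dec (u 0) = u (0 + 2)")
    case True then show ?thesis using that by blast
  next
    case False
    then have "dec (u 0) = u (0 - 1)" using typed by blast
    then have "dec (u (0 - 1)) = u (0 - 1 + int s)" by (rule G1b)
    then show ?thesis using that[of "-1"] s2 by simp
  qed
  obtain X where X: "X \<in> N" "X (u (y + 2)) \<noteq> Z" using fr R by metis
  have b: "dec (u (y + 2)) = u (y + 1)" by (rule b2[OF s2 _ R X]) (use m5 in auto)
  then have "dec (u (y + 2)) = u (y + 2 - 1)" by (simp add: add.commute)
  then have "dec (u (y + 2 - 1)) = u (y + 2 - 1 + int s)" by (rule G1b)
  then have c1: "dec (u (y + 1)) = u (y + 3)" using s2 by (simp add: add.commute)
  have c2: "dec (u (y + 1)) = u y" using G1a R s2 by simp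
  have "u (y + 3) \<noteq> u y" by (rule u_neq[of _ _ 3]) (use m5 in auto)
  then show False using c1 c2 by simp
qed


section \<open>Case s = 1\<close>

lemma ge1_iff: "(x - y) mod int m \<ge> 1 \<longleftrightarrow> u x \<noteq> u y"
  using u_eq[of x y] mod_nn[of "x - y"] by auto

lemma SB1:
  assumes s1: "s = 1" and X: "X \<in> N"
  shows "(\<lambda>a. if a = u z then X (u z) else Z) \<in> N" (is "?E \<in> N")
proof (rule windowU)
  show "?E \<in> MS" by (rule single_MS[OF N_MS[OF X]])
  fix y
  show "\<exists>D\<in>N. \<forall>w. (w - y) mod int m < int s \<longrightarrow> ?E (u w) = D (u w)"
  proof (cases "u y = u z")
    case True
    have "\<forall>w. (w - y) mod int m < int s \<longrightarrow> ?E (u w) = X (u w)"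
    proof (intro allI impI)
      fix w assume "(w - y) mod int m < int s"
      then have "(w - y) mod int m = 0" using s1 mod_nn[of "w - y"] by simp
      then have "u w = u y" using u_eq[of w y] by simp
      then show "?E (u w) = X (u w)" using True by simp
    qed
    then show ?thesis by (rule bexI[OF _ X])
  next
    case False
    have "\<forall>w. (w - y) mod int m < int s \<longrightarrow> ?E (u w) = (\<lambda>a k. 0) (u w)"
    proof (intro allI impI)
      fix w assume "(w - y) mod int m < int s"
      then have "(w - y) mod int m = 0" using s1 mod_nn[of "w - y"] by simp
      then have "u w = u y" using u_eq[of w y] by simp
      then show "?E (u w) = (\<lambda>a k. 0) (u w)" using False by simp
    qed
    then show ?thesis by (rule bexI[OF _ zero_N])
  qed
qed

lemma S1:
  assumes s1: "s = 1" and out: "u z \<noteq> u y" and nd: "u z \<noteq> dec (u y)" and out2: "u z \<noteq> u y'"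
  shows "dec (u y') \<noteq> u z"
proof -
  obtain X where X: "X \<in> N" "X (u z) = v0"
    using SecU[where y=y and z=z and v=v0] out nd v0_valid s1 ge1_iff by auto
  have E: "(\<lambda>a. if a = u z then X (u z) else Z) \<in> N" by (rule SB1[OF s1 X(1)])
  show ?thesis by (rule SBdec[OF E]) (use X v0_nz out2 s1 ge1_iff in auto)
qed

lemma case_s1: assumes s1: "s = 1" and m3: "m \<ge> 3" shows False
proof -
  define a where "a = dz 0"
  have da: "dec (u 0) = u a" using dz_u a_def by simp
  have a0: "u a \<noteq> u 0" using dec_outU[OF da] s1 ge1_iff[of a 0] by simp
  have C1: "dec (u y) = u a" if "u a \<noteq> u y" for y
  proof (rule ccontr)
    assume "dec (u y) \<noteq> u a"
    then have "dec (u 0) \<noteq> u a" using S1[OF s1 that] a0 by metis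
    then show False using da by simp
  qed
  define b where "b = dz a"
  have db: "dec (u a) = u b" using dz_u b_def by simp
  have ba: "u b \<noteq> u a" using dec_outU[OF db] s1 ge1_iff[of b a] by simp
  have C2: "dec (u y) = u b" if "u b \<noteq> u y" for y
  proof (rule ccontr)
    assume "dec (u y) \<noteq> u b"
    then have "dec (u a) \<noteq> u b" using S1[OF s1 that] ba by metis
    then show False using db by simp
  qed
  have n1: "u (a + 1) \<noteq> u a" by (rule u_neq[of _ _ 1]) (use m3 in auto)
  have n2: "u (a + 2) \<noteq> u a" by (rule u_neq[of _ _ 2]) (use m3 in auto)
  have n12: "u (a + 2) \<noteq> u (a + 1)" by (rule u_neq[of _ _ 1]) (use m3 in auto)
  obtain y where y: "u y \<noteq> u a" "u y \<noteq> u b"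
  proof (cases "u (a + 1) = u b")
    case True then show ?thesis using that[of "a + 2"] n2 n12 by metis
  next
    case False then show ?thesis using that[of "a + 1"] n1 by metis
  qed
  have "dec (u y) = u a" using C1 y by metis
  moreover have "dec (u y) = u b" using C2 y by metis
  ultimately show False using ba by simp
qed

end



context scheme begin

definition mkE :: "int \<Rightarrow> (int \<Rightarrow> nat \<Rightarrow> nat \<Rightarrow> 'f) \<Rightarrow> nat \<Rightarrow> nat \<Rightarrow> 'f" where
  "mkE j \<Phi> a = (if a \<in> {1..m} then \<Phi> ((int a - 1 - j) mod int m) a else Z)"

lemma mkE_u: "mkE j \<Phi> (u w) = \<Phi> ((w - j) mod int m) (u w)"
proof -
  have "int (u w) - 1 = w mod int m" unfolding u_def using mod_nn[of w] by simp
  then have "(int (u w) - 1 - j) mod int m = (w - j) mod int m" by (simp add: mod_diff_left_eq)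
  then show ?thesis unfolding mkE_def using u_range by simp
qed

lemma zA_at: "zA F y \<Longrightarrow> 0 \<le> p - y \<Longrightarrow> p - y < int s \<Longrightarrow> F (u p) = Z"
  unfolding zA_def using mod_small[of "p - y"] sm' by auto

definition PhiPS :: "int \<Rightarrow> int \<Rightarrow> (nat \<Rightarrow> nat \<Rightarrow> 'f) \<Rightarrow> (nat \<Rightarrow> nat \<Rightarrow> 'f) \<Rightarrow> (nat \<Rightarrow> nat \<Rightarrow> 'f) \<Rightarrow> int \<Rightarrow> nat \<Rightarrow> nat \<Rightarrow> 'f" where
  "PhiPS \<alpha> \<beta> X F G q a = (if q \<le> 2 then Z else
      (\<lambda>k. X a k - (if q \<le> \<alpha> - 1 then F a k else 0) - (if \<beta> + 3 \<le> q then G a k else 0)))"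

lemma PS_mid:
  assumes s3: "s = 3"
    and FZ: "\<And>p. \<alpha> \<le> p \<Longrightarrow> p \<le> \<alpha> + 2 \<Longrightarrow> F (u (j + p)) = Z"
    and GZ: "\<And>p. \<beta> \<le> p \<Longrightarrow> p \<le> \<beta> + 2 \<Longrightarrow> G (u (j + p)) = Z"
    and F2: "F (u (j + 2)) = X (u (j + 2))" and Gj: "G (u j) = X (u j)"
    and \<alpha>: "3 \<le> \<alpha>" "\<alpha> \<le> int m - 2" and \<beta>: "2 \<le> \<beta>" "\<beta> \<le> int m - 3"
    and q: "2 \<le> q" "q \<le> int m - 2" and t: "0 \<le> t" "t \<le> 2"
  shows "PhiPS \<alpha> \<beta> X F G ((q + t) mod int m) (u (j + q + t)) =
         (\<lambda>k. X (u (j + q + t)) k - (if q \<le> \<alpha> then F (u (j + q + t)) k else 0)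
                - (if \<beta> \<le> q then G (u (j + q + t)) k else 0))"
proof (cases "q + t < int m")
  case True
  then have pm: "(q + t) mod int m = q + t" using q t by (intro mod_small) auto
  show ?thesis
  proof (cases "q + t = 2")
    case True
    then have qt: "q = 2" "t = 0" using q t by auto
    have "G (u (j + 2)) = Z" if "\<beta> = 2" using GZ[of 2] that by simp
    then show ?thesis using pm qt \<alpha> \<beta> F2 unfolding PhiPS_def by (auto simp: fun_eq_iff)
  next
    case False
    then have p3: "3 \<le> q + t" using q t by auto
    have fF: "(if q + t \<le> \<alpha> - 1 then F (u (j + q + t)) k else 0) = (if q \<le> \<alpha> then F (u (j + q + t)) k else 0)" for k
    proof (cases "q \<le> \<alpha>")
      case True
      show ?thesis
      proof (cases "q + t \<le> \<alpha> - 1")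
        case False
        then have "F (u (j + (q + t))) = Z" using FZ[of "q + t"] True t by auto
        then show ?thesis using False True by (simp add: add.assoc)
      qed (use True in auto)
    qed (use t in auto)
    have fG: "(if \<beta> + 3 \<le> q + t then G (u (j + q + t)) k else 0) = (if \<beta> \<le> q then G (u (j + q + t)) k else 0)" for k
    proof (cases "\<beta> \<le> q")
      case True
      show ?thesis
      proof (cases "\<beta> + 3 \<le> q + t")
        case False
        then have "G (u (j + (q + t))) = Z" using GZ[of "q + t"] True t by auto
        then show ?thesis using False True by (simp add: add.assoc)
      qed (use True in auto)
    qed (use t in auto)
    show ?thesis unfolding PhiPS_def pm using p3 fF fG by (auto simp: fun_eq_iff)
  qed
next
  case False
  then have qt: "q + t = int m" using q t by auto
  then have pm: "(q + t) mod int m = 0" by simp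
  have uj: "u (j + q + t) = u j" by (rule u_eqc[of _ _ "int m"]) (use qt in auto)
  have qm: "q = int m - 2" "t = 2" using qt q t by auto
  have "F (u j) = Z" if "int m - 2 \<le> \<alpha>"
  proof -
    have "F (u (j + (int m))) = Z" using FZ[of "int m"] that \<alpha> by auto
    moreover have "u (j + int m) = u j" by (rule u_eqc[of _ _ "int m"]) auto
    ultimately show ?thesis by simp
  qed
  then show ?thesis unfolding PhiPS_def pm uj using qm \<alpha> \<beta> Gj by (auto simp: fun_eq_iff)
qed


lemma mkE_MS:
  assumes "\<And>q a k. a \<in> {1..m} \<Longrightarrow> \<kappa> \<le> k \<Longrightarrow> \<Phi> q a k = 0"
  shows "mkE j \<Phi> \<in> MS"
  unfolding msg_space_def mkE_def using assms by (auto simp: not_le[symmetric])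

lemma PS:
  assumes s3: "s = 3" and m7: "m \<ge> 7"
    and d: "dec (u j) = u (j + \<delta>)" and \<delta>: "4 \<le> \<delta>" "\<delta> \<le> int m - 2"
    and X: "X \<in> N" "X (u (j + \<delta>)) \<noteq> Z"
    and \<alpha>: "3 \<le> \<alpha>" "\<alpha> \<le> \<delta>" and d\<alpha>: "dec (u (j + \<alpha>)) \<noteq> u (j + 2)"
    and \<beta>: "2 \<le> \<beta>" "\<delta> - 2 \<le> \<beta>" "\<beta> \<le> int m - 3" and d\<beta>: "dec (u (j + \<beta>)) \<noteq> u j"
  shows False
proof -
  have ma: "(j + 2 - (j + \<alpha>)) mod int m = (2 - \<alpha>) + int m" by (rule modvn) (use \<alpha> \<delta> in auto)
  obtain F where F: "F \<in> N" "zA F (j + \<alpha>)" "F (u (j + 2)) = X (u (j + 2))"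
    using SecU[where y="j + \<alpha>" and z="j + 2" and v="X (u (j + 2))"] ma \<alpha> \<delta> s3 d\<alpha> valX[OF X(1)] by auto
  have mb: "(j - (j + \<beta>)) mod int m = (- \<beta>) + int m" by (rule modvn) (use \<beta> in auto)
  obtain G where G: "G \<in> N" "zA G (j + \<beta>)" "G (u j) = X (u j)"
    using SecU[where y="j + \<beta>" and z="j" and v="X (u j)"] mb \<beta> s3 d\<beta> valX[OF X(1)] by auto
  have FZ: "F (u (j + p)) = Z" if "\<alpha> \<le> p" "p \<le> \<alpha> + 2" for p
    by (rule zA_at[OF F(2)]) (use that s3 in auto)
  have GZ: "G (u (j + p)) = Z" if "\<beta> \<le> p" "p \<le> \<beta> + 2" for p
    by (rule zA_at[OF G(2)]) (use that s3 in auto)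
  define \<Phi> where "\<Phi> = PhiPS \<alpha> \<beta> X F G"
  define E where "E = mkE j \<Phi>"
  have Eu: "E (u w) = \<Phi> ((w - j) mod int m) (u w)" for w unfolding E_def by (rule mkE_u)
  have EMS: "E \<in> MS" unfolding E_def
  proof (rule mkE_MS)
    fix q a k assume "a \<in> {1..m}" "\<kappa> \<le> k"
    then show "\<Phi> q a k = 0" unfolding \<Phi>_def PhiPS_def using valX[OF X(1)] valX[OF F(1)] valX[OF G(1)] by auto
  qed
  have EN: "E \<in> N"
  proof (rule windowR[where j = j, OF EMS])
    fix q assume q: "0 \<le> q" "q < int m"
    show "\<exists>D\<in>N. \<forall>t. 0 \<le> t \<longrightarrow> t < int s \<longrightarrow> E (u (j + q + t)) = D (u (j + q + t))"
    proof (cases "q \<le> 1 \<or> q = int m - 1")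
      case False
      then have q2: "2 \<le> q" "q \<le> int m - 2" using q by auto
      define D where "D = dsub (dsub X (if q \<le> \<alpha> then F else (\<lambda>a k. 0))) (if \<beta> \<le> q then G else (\<lambda>a k. 0))"
      have DN: "D \<in> N" unfolding D_def using F(1) G(1) X(1) zero_N by (intro N_sub) auto
      have "\<forall>t. 0 \<le> t \<longrightarrow> t < int s \<longrightarrow> E (u (j + q + t)) = D (u (j + q + t))"
      proof (intro allI impI)
        fix t :: int assume t: "0 \<le> t" "t < int s"
        have "E (u (j + q + t)) = \<Phi> ((q + t) mod int m) (u (j + q + t))" using Eu[of "j + q + t"] by (simp add: add.assoc)
        also have "\<dots> = (\<lambda>k. X (u (j + q + t)) k - (if q \<le> \<alpha> then F (u (j + q + t)) k else 0)
                - (if \<beta> \<le> q then G (u (j + q + t)) k else 0))" unfolding \<Phi>_def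
          by (rule PS_mid[where \<alpha>=\<alpha> and \<beta>=\<beta> and X=X and F=F and G=G and j=j and q=q and t=t])
             (use s3 FZ GZ F(3) G(3) \<alpha> \<beta> q2 t \<delta> in auto)
        also have "\<dots> = D (u (j + q + t))" unfolding D_def dsub_app by (auto simp: fun_eq_iff)
        finally show "E (u (j + q + t)) = D (u (j + q + t))" .
      qed
      then show ?thesis using DN by blast
    next
      case True
      then consider "q = 0" | "q = 1" | "q = int m - 1" using q by linarith
      then show ?thesis
      proof cases
        case 1
        have "\<forall>t. 0 \<le> t \<longrightarrow> t < int s \<longrightarrow> E (u (j + q + t)) = (\<lambda>a k. 0) (u (j + q + t))"
        proof (intro allI impI)
          fix t :: int assume t: "0 \<le> t" "t < int s"
          have "(t) mod int m = t" using t s3 m7 by (intro mod_small) auto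
          then show "E (u (j + q + t)) = (\<lambda>a k. 0) (u (j + q + t))"
            using Eu[of "j + q + t"] 1 t s3 unfolding \<Phi>_def PhiPS_def by simp
        qed
        then show ?thesis by (rule bexI[OF _ zero_N])
      next
        case 2
        have m3: "(j + 3 - j) mod int m = 3" by (rule modv) (use m7 in auto)
        have n3: "u (j + 3) \<noteq> dec (u j)" unfolding d by (rule u_neqn[of _ _ "3 - \<delta>"]) (use \<delta> in auto)
        obtain D where D: "D \<in> N" "zA D j" "D (u (j + 3)) = E (u (j + 3))"
          using SecU[where y=j and z="j + 3" and v="E (u (j + 3))"] m3 s3 n3 MS_val[OF EMS] by auto
        have "\<forall>t. 0 \<le> t \<longrightarrow> t < int s \<longrightarrow> E (u (j + q + t)) = D (u (j + q + t))"
        proof (intro allI impI)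
          fix t :: int assume t: "0 \<le> t" "t < int s"
          then consider "t = 0" | "t = 1" | "t = 2" using s3 by linarith
          then show "E (u (j + q + t)) = D (u (j + q + t))"
          proof cases
            case 1
            have "(1::int) mod int m = 1" using m7 by (intro mod_small) auto
            then show ?thesis using Eu[of "j + 1"] zA_at[OF D(2), of "j + 1"] 1 2 s3
              unfolding \<Phi>_def PhiPS_def by simp
          next
            case 2
            have "(2::int) mod int m = 2" using m7 by (intro mod_small) auto
            then show ?thesis using Eu[of "j + 2"] zA_at[OF D(2), of "j + 2"] \<open>q = 1\<close> 2 s3
              unfolding \<Phi>_def PhiPS_def by (simp add: add.assoc)
          next
            case 3
            then show ?thesis using D(3) \<open>q = 1\<close> by (simp add: add.assoc)
          qed
        qed
        then show ?thesis using D(1) by blast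
      next
        case 3
        have m3: "(j + (int m - 1) - j) mod int m = int m - 1" by (rule modv) (use m7 in auto)
        have n3: "u (j + (int m - 1)) \<noteq> dec (u j)" unfolding d by (rule u_neq[of _ _ "int m - 1 - \<delta>"]) (use \<delta> in auto)
        obtain D where D: "D \<in> N" "zA D j" "D (u (j + (int m - 1))) = E (u (j + (int m - 1)))"
          using SecU[where y=j and z="j + (int m - 1)" and v="E (u (j + (int m - 1)))"] m3 s3 m7 n3 MS_val[OF EMS] by auto
        have "\<forall>t. 0 \<le> t \<longrightarrow> t < int s \<longrightarrow> E (u (j + q + t)) = D (u (j + q + t))"
        proof (intro allI impI)
          fix t :: int assume t: "0 \<le> t" "t < int s"
          then consider "t = 0" | "t = 1" | "t = 2" using s3 by linarith
          then show "E (u (j + q + t)) = D (u (j + q + t))"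
          proof cases
            case 1
            then show ?thesis using D(3) 3 by simp
          next
            case 2
            have e: "u (j + q + t) = u j" by (rule u_eqc[of _ _ "int m"]) (use 2 3 in auto)
            have "E (u j) = Z" using Eu[of j] unfolding \<Phi>_def PhiPS_def by simp
            moreover have "D (u j) = Z" using zA_at[OF D(2), of j] s3 by simp
            ultimately show ?thesis using e by simp
          next
            case 3
            have e: "u (j + q + t) = u (j + 1)" by (rule u_eqc[of _ _ "int m"]) (use 3 \<open>q = int m - 1\<close> in auto)
            have "(1::int) mod int m = 1" using m7 by (intro mod_small) auto
            then have "E (u (j + 1)) = Z" using Eu[of "j + 1"] unfolding \<Phi>_def PhiPS_def by simp
            moreover have "D (u (j + 1)) = Z" using zA_at[OF D(2), of "j + 1"] s3 by simp
            ultimately show ?thesis using e by simp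
          qed
        qed
        then show ?thesis using D(1) by blast
      qed
    qed
  qed
  have "zA E j" unfolding zA_def
  proof (intro allI impI)
    fix w assume "(w - j) mod int m < int s"
    then show "E (u w) = Z" using Eu[of w] s3 unfolding \<Phi>_def PhiPS_def by simp
  qed
  then have "E (dec (u j)) = Z" using DecU[OF EN] by blast
  moreover have "(j + \<delta> - j) mod int m = \<delta>" by (rule modv) (use \<delta> in auto)
  then have "E (u (j + \<delta>)) = X (u (j + \<delta>))" using Eu[of "j + \<delta>"] \<delta> \<alpha> \<beta>
    unfolding \<Phi>_def PhiPS_def by (auto simp: fun_eq_iff)
  ultimately show False using d X(2) by simp
qed


lemma PSdisj:
  assumes s3: "s = 3" and m7: "m \<ge> 7"
    and d: "dec (u j) = u (j + \<delta>)" and \<delta>: "4 \<le> \<delta>" "\<delta> \<le> int m - 2"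
    and X: "X \<in> N" "X (u (j + \<delta>)) \<noteq> Z"
  shows "(\<forall>\<alpha>. 3 \<le> \<alpha> \<longrightarrow> \<alpha> \<le> \<delta> \<longrightarrow> dec (u (j + \<alpha>)) = u (j + 2)) \<or>
         (\<forall>\<beta>. 2 \<le> \<beta> \<longrightarrow> \<delta> - 2 \<le> \<beta> \<longrightarrow> \<beta> \<le> int m - 3 \<longrightarrow> dec (u (j + \<beta>)) = u j)"
  using PS[OF s3 m7 d \<delta> X] by blast

lemma u_shift: "u (a + int m) = u a" by (rule u_eqc[of _ _ "int m"]) auto

lemma nf_pop3:
  assumes s3: "s = 3" and nf: "\<forall>X\<in>N. X (u z) = Z" and out: "(z - y) mod int m \<ge> 3"
  shows "dec (u y) = u z"
  using pop[OF nf] out s3 by simp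

lemma interior_nf:
  assumes s3: "s = 3" and m7: "m \<ge> 7"
    and d: "dec (u j) = u (j + \<delta>)" and \<delta>: "4 \<le> \<delta>" "\<delta> \<le> int m - 2"
  shows "\<forall>X\<in>N. X (u (j + \<delta>)) = Z"
proof (rule ccontr)
  assume "\<not> (\<forall>X\<in>N. X (u (j + \<delta>)) = Z)"
  then obtain X where X: "X \<in> N" "X (u (j + \<delta>)) \<noteq> Z" by blast
  from PSdisj[OF s3 m7 d \<delta> X] show False
  proof
    assume L: "\<forall>\<alpha>. 3 \<le> \<alpha> \<longrightarrow> \<alpha> \<le> \<delta> \<longrightarrow> dec (u (j + \<alpha>)) = u (j + 2)"
    have d3: "dec (u (j + 3)) = u (j + 2)" using L[rule_format, of 3] \<delta> by simp
    have d4: "dec (u (j + 4)) = u (j + 2)" using L[rule_format, of 4] \<delta> by simp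
    have "dec (u (j + 3)) = u (j + 3 - 1)" using d3 by (simp add: algebra_simps)
    then have "dec (u (j + 3 - 1)) = u (j + 3 - 1 + int s)" by (rule G1b)
    then have d2: "dec (u (j + 2)) = u (j + 5)" using s3 by (simp add: algebra_simps)
    have free2: "\<exists>X\<in>N. X (u (j + 2)) \<noteq> Z"
    proof (rule ccontr)
      assume "\<not> (\<exists>X\<in>N. X (u (j + 2)) \<noteq> Z)"
      then have nf: "\<forall>X\<in>N. X (u (j + 2)) = Z" by blast
      have "(j + 2 - (j - 1)) mod int m = 3" by (rule modv) (use m7 in auto)
      then have "dec (u (j - 1)) = u (j + 2)" using nf_pop3[OF s3 nf] by (simp add: algebra_simps)
      then have "dec (u (j - 1)) = u (j - 1 + int s)" using s3 by (simp add: algebra_simps)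
      then have "dec (u (j - 1 + 1)) = u (j - 1)" by (rule G1a)
      then have "u (j + \<delta>) = u (j - 1)" using d by (simp add: algebra_simps)
      moreover have "u (j + \<delta>) \<noteq> u (j - 1)" by (rule u_neq[of _ _ "\<delta> + 1"]) (use \<delta> in auto)
      ultimately show False by simp
    qed
    then obtain X2 where X2: "X2 \<in> N" "X2 (u (j + 2)) \<noteq> Z" by blast
    have eJ: "u (j + 4 + (int m - 2)) = u (j + 2)" by (rule u_eqc[of _ _ "int m"]) auto
    have dJ: "dec (u (j + 4)) = u (j + 4 + (int m - 2))" using d4 eJ by (simp add: algebra_simps)
    have X2': "X2 (u (j + 4 + (int m - 2))) \<noteq> Z" using X2(2) eJ by (simp add: algebra_simps)
    have disj: "(\<forall>\<alpha>. 3 \<le> \<alpha> \<longrightarrow> \<alpha> \<le> int m - 2 \<longrightarrow> dec (u (j + 4 + \<alpha>)) = u (j + 4 + 2)) \<or>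
         (\<forall>\<beta>. 2 \<le> \<beta> \<longrightarrow> int m - 2 - 2 \<le> \<beta> \<longrightarrow> \<beta> \<le> int m - 3 \<longrightarrow> dec (u (j + 4 + \<beta>)) = u (j + 4))"
      by (rule PSdisj[OF s3 m7 dJ _ _ X2(1) X2']) (use m7 in auto)
    from disj show False
    proof
      assume LJ: "\<forall>\<alpha>. 3 \<le> \<alpha> \<longrightarrow> \<alpha> \<le> int m - 2 \<longrightarrow> dec (u (j + 4 + \<alpha>)) = u (j + 4 + 2)"
      have "dec (u (j + 4 + (int m - 2))) = u (j + 4 + 2)" using LJ[rule_format, of "int m - 2"] m7 by simp
      then have "dec (u (j + 2)) = u (j + 6)" using eJ by (simp add: algebra_simps)
      moreover have "u (j + 6) \<noteq> u (j + 5)" by (rule u_neq[of _ _ 1]) (use m7 in auto)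
      ultimately show False using d2 by simp
    next
      assume RJ: "\<forall>\<beta>. 2 \<le> \<beta> \<longrightarrow> int m - 2 - 2 \<le> \<beta> \<longrightarrow> \<beta> \<le> int m - 3 \<longrightarrow> dec (u (j + 4 + \<beta>)) = u (j + 4)"
      have "dec (u (j + 4 + (int m - 3))) = u (j + 4)" using RJ[rule_format, of "int m - 3"] m7 by simp
      moreover have "u (j + 4 + (int m - 3)) = u (j + 1)" by (rule u_eqc[of _ _ "int m"]) auto
      ultimately have "dec (u (j + 1)) = u (j + 1 + int s)" using s3 by (simp add: algebra_simps)
      then have "dec (u (j + 1 + 1)) = u (j + 1)" by (rule G1a)
      then have "u (j + 5) = u (j + 1)" using d2 by (simp add: algebra_simps)
      moreover have "u (j + 5) \<noteq> u (j + 1)" by (rule u_neq[of _ _ 4]) (use m7 in auto)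
      ultimately show False by simp
    qed
  next
    assume R: "\<forall>\<beta>. 2 \<le> \<beta> \<longrightarrow> \<delta> - 2 \<le> \<beta> \<longrightarrow> \<beta> \<le> int m - 3 \<longrightarrow> dec (u (j + \<beta>)) = u j"
    have r3: "dec (u (j + (int m - 3))) = u j" using R[rule_format, of "int m - 3"] \<delta> m7 by simp
    have r4: "dec (u (j + (int m - 4))) = u j" using R[rule_format, of "int m - 4"] \<delta> m7 by simp
    have "u j = u (j + (int m - 3) + int s)" using s3 by (intro u_eqc[of _ _ "- int m"]) auto
    then have "dec (u (j + (int m - 3))) = u (j + (int m - 3) + int s)" using r3 by (simp add: algebra_simps)
    then have "dec (u (j + (int m - 3) + 1)) = u (j + (int m - 3))" by (rule G1a)
    then have c1: "dec (u (j + (int m - 2))) = u (j + (int m - 3))" by (simp add: algebra_simps)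
    have freej: "\<exists>X\<in>N. X (u j) \<noteq> Z"
    proof (rule ccontr)
      assume "\<not> (\<exists>X\<in>N. X (u j) \<noteq> Z)"
      then have nf: "\<forall>X\<in>N. X (u j) = Z" by blast
      have "(j - (j + 1)) mod int m = -1 + int m" by (rule modvn) (use m7 in auto)
      then have "dec (u (j + 1)) = u j" using nf_pop3[OF s3 nf] m7 by (simp add: algebra_simps)
      then have "dec (u (j + 1)) = u (j + 1 - 1)" by (simp add: algebra_simps)
      then have "dec (u (j + 1 - 1)) = u (j + 1 - 1 + int s)" by (rule G1b)
      then have "u (j + \<delta>) = u (j + 3)" using d s3 by (simp add: algebra_simps)
      moreover have "u (j + \<delta>) \<noteq> u (j + 3)" by (rule u_neq[of _ _ "\<delta> - 3"]) (use \<delta> in auto)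
      ultimately show False by simp
    qed
    then obtain X3 where X3: "X3 \<in> N" "X3 (u j) \<noteq> Z" by blast
    have eJ: "u (j + (int m - 4) + 4) = u j" by (rule u_eqc[of _ _ "int m"]) auto
    have dJ: "dec (u (j + (int m - 4))) = u (j + (int m - 4) + 4)" using r4 eJ by (simp add: algebra_simps)
    have X3': "X3 (u (j + (int m - 4) + 4)) \<noteq> Z" using X3(2) eJ by (simp add: algebra_simps)
    have disj: "(\<forall>\<alpha>. 3 \<le> \<alpha> \<longrightarrow> \<alpha> \<le> 4 \<longrightarrow> dec (u (j + (int m - 4) + \<alpha>)) = u (j + (int m - 4) + 2)) \<or>
         (\<forall>\<beta>. 2 \<le> \<beta> \<longrightarrow> 4 - 2 \<le> \<beta> \<longrightarrow> \<beta> \<le> int m - 3 \<longrightarrow> dec (u (j + (int m - 4) + \<beta>)) = u (j + (int m - 4)))"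
      by (rule PSdisj[OF s3 m7 dJ _ _ X3(1) X3']) (use m7 in auto)
    from disj show False
    proof
      assume LJ: "\<forall>\<alpha>. 3 \<le> \<alpha> \<longrightarrow> \<alpha> \<le> 4 \<longrightarrow> dec (u (j + (int m - 4) + \<alpha>)) = u (j + (int m - 4) + 2)"
      have "dec (u (j + (int m - 4) + 3)) = u (j + (int m - 4) + 2)" using LJ[rule_format, of 3] by simp
      then have "dec (u (j + (int m - 1))) = u (j + (int m - 1) - 1)" by (simp add: algebra_simps)
      then have "dec (u (j + (int m - 1) - 1)) = u (j + (int m - 1) - 1 + int s)" by (rule G1b)
      then have "dec (u (j + (int m - 2))) = u (j + (int m + 1))" using s3 by (simp add: algebra_simps)
      then have "u (j + (int m + 1)) = u (j + (int m - 3))" using c1 by (simp add: algebra_simps)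
      moreover have "u (j + (int m + 1)) \<noteq> u (j + (int m - 3))" by (rule u_neq[of _ _ 4]) (use m7 in auto)
      ultimately show False by simp
    next
      assume RJ: "\<forall>\<beta>. 2 \<le> \<beta> \<longrightarrow> 4 - 2 \<le> \<beta> \<longrightarrow> \<beta> \<le> int m - 3 \<longrightarrow> dec (u (j + (int m - 4) + \<beta>)) = u (j + (int m - 4))"
      have "dec (u (j + (int m - 4) + 2)) = u (j + (int m - 4))" using RJ[rule_format, of 2] m7 by simp
      then have "dec (u (j + (int m - 2))) = u (j + (int m - 4))" by (simp add: algebra_simps)
      then have "u (j + (int m - 3)) = u (j + (int m - 4))" using c1 by (simp add: algebra_simps)
      moreover have "u (j + (int m - 3)) \<noteq> u (j + (int m - 4))" by (rule u_neq[of _ _ 1]) (use m7 in auto)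
      ultimately show False by simp
    qed
  qed
qed


lemma case_s3: assumes s3: "s = 3" and m7: "m \<ge> 7" and odd: "odd m" shows False
proof (cases "\<forall>y. dec (u y) = u (y + int s) \<or> dec (u y) = u (y - 1)")
  case True
  show False by (rule parity[OF _ _ odd]) (use True s3 m7 in auto)
next
  case False
  then obtain y0 where ny: "dec (u y0) \<noteq> u (y0 + 3)" "dec (u y0) \<noteq> u (y0 - 1)" using s3 by auto
  obtain r where r: "(dz y0 - y0) mod int m = r" by blast
  have rb: "3 \<le> r" "r < int m" using dz_out[of y0] r s3 mod_nn[of "dz y0 - y0"] by auto
  have dr: "dec (u y0) = u (y0 + r)" using u_eq_off[OF r] dz_u by simp
  have "r \<noteq> 3" using ny dr by auto
  moreover have "r \<noteq> int m - 1"
  proof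
    assume "r = int m - 1"
    then have "u (dz y0) = u (y0 - 1)" using u_eq_offn r by blast
    then show False using ny dz_u by simp
  qed
  ultimately have rb2: "4 \<le> r" "r \<le> int m - 2" using rb by auto
  define z0 where "z0 = y0 + r"
  have nf: "\<forall>X\<in>N. X (u z0) = Z" unfolding z0_def by (rule interior_nf[OF s3 m7 dr rb2])
  have "(z0 - (z0 + 1)) mod int m = -1 + int m" by (rule modvn) (use m7 in auto)
  then have "dec (u (z0 + 1)) = u z0" using nf_pop3[OF s3 nf] m7 by simp
  then have "dec (u (z0 + 1)) = u (z0 + 1 - 1)" by simp
  then have "dec (u (z0 + 1 - 1)) = u (z0 + 1 - 1 + int s)" by (rule G1b)
  then have R0: "dec (u z0) = u (z0 + 3)" using s3 by simp
  have "(z0 - (z0 - 3)) mod int m = 3" by (rule modv) (use m7 in auto)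
  then have "dec (u (z0 - 3)) = u z0" using nf_pop3[OF s3 nf] by simp
  then have "dec (u (z0 - 3)) = u (z0 - 3 + int s)" using s3 by simp
  then have "dec (u (z0 - 3 + 1)) = u (z0 - 3)" by (rule G1a)
  then have L2: "dec (u (z0 - 2)) = u (z0 - 3)" by (simp add: algebra_simps)
  obtain r1 where r1: "(dz (z0 - 1) - (z0 - 1)) mod int m = r1" by blast
  have r1b: "3 \<le> r1" "r1 < int m" using dz_out[of "z0 - 1"] r1 s3 mod_nn[of "dz (z0 - 1) - (z0 - 1)"] by auto
  have dr1: "dec (u (z0 - 1)) = u (z0 - 1 + r1)" using u_eq_off[OF r1] dz_u by simp
  have n3: "r1 \<noteq> 3"
  proof
    assume "r1 = 3"
    then have "dec (u (z0 - 1)) = u (z0 - 1 + int s)" using dr1 s3 by simp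
    then have "dec (u (z0 - 1 + 1)) = u (z0 - 1)" by (rule G1a)
    then have "u (z0 + 3) = u (z0 - 1)" using R0 by simp
    moreover have "u (z0 + 3) \<noteq> u (z0 - 1)" by (rule u_neq[of _ _ 4]) (use m7 in auto)
    ultimately show False by simp
  qed
  have nL: "r1 \<noteq> int m - 1"
  proof
    assume "r1 = int m - 1"
    then have "u (dz (z0 - 1)) = u (z0 - 1 - 1)" using u_eq_offn r1 by blast
    then have "dec (u (z0 - 1)) = u (z0 - 1 - 1)" using dz_u by simp
    then have "dec (u (z0 - 1 - 1)) = u (z0 - 1 - 1 + int s)" by (rule G1b)
    then have "u (z0 - 3) = u (z0 + 1)" using L2 s3 by (simp add: algebra_simps)
    moreover have "u (z0 - 3) \<noteq> u (z0 + 1)" by (rule u_neqn[of _ _ "-4"]) (use m7 in auto)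
    ultimately show False by simp
  qed
  have r1b2: "4 \<le> r1" "r1 \<le> int m - 2" using r1b n3 nL by auto
  define z1 where "z1 = z0 - 1 + r1"
  have nf1: "\<forall>X\<in>N. X (u z1) = Z" unfolding z1_def by (rule interior_nf[OF s3 m7 dr1 r1b2])
  have z01: "u z1 \<noteq> u z0" by (rule u_neq[of _ _ "r1 - 1"]) (use r1b2 z1_def in auto)
  show False
  proof (cases "r1 = 4")
    case True
    have "(z0 - (z0 - 3)) mod int m = 3" by (rule modv) (use m7 in auto)
    then have a: "dec (u (z0 - 3)) = u z0" using nf_pop3[OF s3 nf] by simp
    have "(z1 - (z0 - 3)) mod int m = 6" by (rule modv) (use m7 True z1_def in auto)
    then have b: "dec (u (z0 - 3)) = u z1" using nf_pop3[OF s3 nf1] by simp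
    show False using a b z01 by simp
  next
    case False
    have "(z0 - (z0 + 1)) mod int m = -1 + int m" by (rule modvn) (use m7 in auto)
    then have a: "dec (u (z0 + 1)) = u z0" using nf_pop3[OF s3 nf] m7 by simp
    have "(z1 - (z0 + 1)) mod int m = r1 - 2" by (rule modv) (use r1b2 z1_def in auto)
    then have b: "dec (u (z0 + 1)) = u z1" using nf_pop3[OF s3 nf1] False r1b2 by simp
    show False using a b z01 by simp
  qed
qed

end



theorem theorem1:
  fixes m s \<kappa> :: nat and L :: "nat \<Rightarrow> nat"
    and c :: "nat \<Rightarrow> nat \<Rightarrow> nat \<Rightarrow> nat \<Rightarrow> 'f::{field,finite}"
  assumes "m \<ge> 2" and "1 \<le> s" and "s \<le> m - 1" and "\<kappa> \<ge> 1"
    and "(s = 1 \<and> m \<ge> 3) \<or> (s = 2 \<and> m \<ge> 5) \<or> (s = 3 \<and> odd m) \<or> (s = m - 2 \<and> odd m)"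
  shows "\<not> feasible_linear m s \<kappa> L c"
proof
  assume F: "feasible_linear m s \<kappa> L c"
  let ?P = "\<lambda>j d. d \<in> {1..m} - side_info m s j \<and>
        (\<exists>DEC :: (nat \<Rightarrow> nat \<Rightarrow> 'f) \<Rightarrow> (nat \<Rightarrow> nat \<Rightarrow> 'f) \<Rightarrow> (nat \<Rightarrow> 'f).
           \<forall>W\<in>(msg_space m \<kappa> :: (nat \<Rightarrow> nat \<Rightarrow> 'f) set).
             DEC (restr (side_info m s j) W) (lin_transmit m s \<kappa> L c W) = W d)
      \<and> (\<forall>i\<in>{1..m} - ({d} \<union> side_info m s j).
           cond_indep_unif (msg_space m \<kappa> :: (nat \<Rightarrow> nat \<Rightarrow> 'f) set)
             (\<lambda>W. W i) (lin_transmit m s \<kappa> L c) (\<lambda>W. restr (side_info m s j) W))"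
  define dec where "dec j = (SOME d. ?P j d)" for j
  have P: "?P j (dec j)" if "j \<in> {1..m}" for j
  proof -
    have "\<exists>d. ?P j d" using F that unfolding feasible_linear_def by blast
    then show ?thesis unfolding dec_def by (rule someI_ex)
  qed
  interpret S: scheme m s \<kappa> L c dec
  proof
    show "2 \<le> m" "1 \<le> s" "s \<le> m - 1" "1 \<le> \<kappa>" using assms by auto
    fix j assume j: "j \<in> {1..m}"
    show "dec j \<in> {1..m} - side_info m s j" using P[OF j] by blast
    show "\<exists>DEC :: (nat \<Rightarrow> nat \<Rightarrow> 'f) \<Rightarrow> (nat \<Rightarrow> nat \<Rightarrow> 'f) \<Rightarrow> (nat \<Rightarrow> 'f).
           \<forall>W\<in>(msg_space m \<kappa> :: (nat \<Rightarrow> nat \<Rightarrow> 'f) set).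
             DEC (restr (side_info m s j) W) (lin_transmit m s \<kappa> L c W) = W (dec j)"
      using P[OF j] by blast
    fix i assume "i \<in> {1..m} - ({dec j} \<union> side_info m s j)"
    then show "cond_indep_unif (msg_space m \<kappa> :: (nat \<Rightarrow> nat \<Rightarrow> 'f) set)
             (\<lambda>W. W i) (lin_transmit m s \<kappa> L c) (\<lambda>W. restr (side_info m s j) W)"
      using P[OF j] by blast
  qed
  from assms(5) show False
  proof (elim disjE conjE)
    assume "s = 1" "m \<ge> 3" then show False by (rule S.case_s1)
  next
    assume "s = 2" "m \<ge> 5" then show False by (rule S.case_s2)
  next
    assume s3: "s = 3" and o: "odd m"
    show False
    proof (cases "m \<ge> 7")
      case True show False by (rule S.case_s3[OF s3 True o])
    next
      case False
      then have "m = 5" using s3 o assms(3) by presburger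
      then show False using S.case_m2[OF _ o] s3 by simp
    qed
  next
    assume "s = m - 2" "odd m" then show False by (rule S.case_m2)
  qed
qed

end
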